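(* Let $\mathcal{L}$ be a finite geometric lattice, $\mathcal{G}$ a building set of $\mathcal{L}$, and $G\in\mathcal{G}$. Then $\mathcal{G}\setminus\{G\}$ is a building set of $\mathcal{L}$ if and only if the join map \[ \prod_{F\in\max(\mathcal{G}\setminus\{G\})_{\leqslant G}}[\hat0,F]\to[\hat0,G],\qquad (H_F)_F\mapsto\bigvee_F H_F, \] is an isomorphism of posets.
   Context: For $\mathcal{H}\subseteq\mathcal{L}$ and $F\in\mathcal{L}$, $\mathcal{H}_{\leqslant F}=\{H\in\mathcal{H}:H\leqslant F\}$ and $\max\mathcal{H}_{\leqslant F}$ is its set of maximal elements. A building set of $\mathcal{L}$ is $\mathcal{G}\subseteq\mathcal{L}\setminus\{\hat0\}$ such that for every $F\neq\hat0$ the join map $\prod_{H\in\max\mathcal{G}_{\leqslant F}}[\hat0,H]\to[\hat0,F]$ is a poset isomorphism. *)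

theory Defs
  imports Main
begin

text \<open>A finite lattice is modelled by a type of class finite and complete_lattice
(every finite lattice is complete); its bottom element is bot.\<close>

definition covers :: "'a::order \<Rightarrow> 'a \<Rightarrow> bool" where
  "covers a b \<longleftrightarrow> a < b \<and> \<not> (\<exists>c. a < c \<and> c < b)"

definition is_atom :: "'a::complete_lattice \<Rightarrow> bool" where
  "is_atom a \<longleftrightarrow> covers bot a"

definition geometric_lattice :: "'a::{finite,complete_lattice} itself \<Rightarrow> bool" where
  "geometric_lattice _ \<longleftrightarrow>
     (\<forall>x::'a. x = Sup {a. is_atom a \<and> a \<le> x}) \<and>
     (\<forall>a b::'a. covers (inf a b) a \<longrightarrow> covers b (sup a b))"

definition maximal_elems :: "'a::order set \<Rightarrow> 'a set" where
  "maximal_elems S = {x \<in> S. \<forall>y \<in> S. x \<le> y \<longrightarrow> y = x}"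

text \<open>Elements of the product of intervals [bot, H], H in M, represented as
functions supported on M.\<close>
definition interval_product :: "'a::complete_lattice set \<Rightarrow> ('a \<Rightarrow> 'a) set" where
  "interval_product M = {h. (\<forall>H\<in>M. bot \<le> h H \<and> h H \<le> H) \<and> (\<forall>H. H \<notin> M \<longrightarrow> h H = bot)}"

definition join_map_iso :: "'a::complete_lattice set \<Rightarrow> 'a \<Rightarrow> bool" where
  "join_map_iso M F \<longleftrightarrow>
     bij_betw (\<lambda>h. Sup (h ` M)) (interval_product M) {bot..F} \<and>
     (\<forall>h\<in>interval_product M. \<forall>h'\<in>interval_product M.
        (\<forall>H\<in>M. h H \<le> h' H) \<longleftrightarrow> Sup (h ` M) \<le> Sup (h' ` M))"

definition building_set :: "'a::complete_lattice set \<Rightarrow> bool" where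
  "building_set \<G> \<longleftrightarrow> \<G> \<subseteq> UNIV - {bot} \<and>
     (\<forall>F. F \<noteq> bot \<longrightarrow> join_map_iso (maximal_elems {H \<in> \<G>. H \<le> F}) F)"

end

theory Submission
  imports Defs
begin

lemma jmi_alt:
  fixes M :: "'a::complete_lattice set"
  shows "join_map_iso M F \<longleftrightarrow>
     (\<lambda>h. Sup (h ` M)) ` interval_product M = {bot..F} \<and>
     (\<forall>h\<in>interval_product M. \<forall>h'\<in>interval_product M.
        (\<forall>H\<in>M. h H \<le> h' H) \<longleftrightarrow> Sup (h ` M) \<le> Sup (h' ` M))"
proof -
  have "inj_on (\<lambda>h. Sup (h ` M)) (interval_product M)"
    if ord: "\<forall>h\<in>interval_product M. \<forall>h'\<in>interval_product M.
        (\<forall>H\<in>M. h H \<le> h' H) \<longleftrightarrow> Sup (h ` M) \<le> Sup (h' ` M)"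
  proof (rule inj_onI)
    fix h h' assume h: "h \<in> interval_product M" and h': "h' \<in> interval_product M"
      and eq: "Sup (h ` M) = Sup (h' ` M)"
    have "\<forall>H\<in>M. h H \<le> h' H" using ord h h' eq by auto
    moreover have "\<forall>H\<in>M. h' H \<le> h H" using ord h h' eq by auto
    ultimately have "\<forall>H\<in>M. h H = h' H" by (auto intro: antisym)
    moreover have "\<forall>H. H \<notin> M \<longrightarrow> h H = h' H"
      using h h' by (simp add: interval_product_def)
    ultimately show "h = h'" by auto
  qed
  then show ?thesis unfolding join_map_iso_def bij_betw_def by blast
qed

lemma jmi_indep:
  fixes M :: "'a::{finite,complete_lattice} set"
  assumes "join_map_iso M F" "H1 \<in> M" "H2 \<in> M" "H1 \<noteq> H2" "x \<le> H1" "x \<le> H2"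
  shows "x = bot"
proof -
  define h1 where "h1 = (\<lambda>H. if H = H1 then x else (bot::'a))"
  define h2 where "h2 = (\<lambda>H. if H = H2 then x else (bot::'a))"
  have i1: "h1 \<in> interval_product M" using assms unfolding h1_def interval_product_def by auto
  have i2: "h2 \<in> interval_product M" using assms unfolding h2_def interval_product_def by auto
  have s1: "Sup (h1 ` M) = x"
    by (rule antisym, rule Sup_least, auto simp: h1_def intro!: Sup_upper image_eqI[where x=H1] assms)
  have s2: "Sup (h2 ` M) = x"
    by (rule antisym, rule Sup_least, auto simp: h2_def intro!: Sup_upper image_eqI[where x=H2] assms)
  have "inj_on (\<lambda>h. Sup (h ` M)) (interval_product M)"
    using assms(1) unfolding join_map_iso_def bij_betw_def by blast
  then have "h1 = h2" using i1 i2 s1 s2 by (auto dest: inj_onD)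
  then have "h1 H1 = h2 H1" by simp
  then show ?thesis using assms(4) by (simp add: h1_def h2_def)
qed

lemma jmi_compose:
  fixes M :: "'a::{finite,complete_lattice} set"
  assumes JM: "join_map_iso M F" and JN: "join_map_iso N G" and GM: "G \<in> M"
    and NM: "N \<inter> M = {}" and NG: "\<forall>H\<in>N. H \<le> G"
  shows "join_map_iso ((M - {G}) \<union> N) F"
proof -
  define M0 where "M0 = M - {G}"
  define M' where "M' = M0 \<union> N"
  define gof where "gof h = (\<lambda>H. if H = G then Sup (h ` N) else if H \<in> M0 then h H else (bot::'a))" for h :: "'a \<Rightarrow> 'a"
  define rN where "rN h = (\<lambda>H. if H \<in> N then h H else (bot::'a))" for h :: "'a \<Rightarrow> 'a"
  have G0: "G \<notin> M0" unfolding M0_def by simp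
  have MI: "M = insert G M0" using GM unfolding M0_def by auto
  have N0: "N \<inter> M0 = {}" using NM unfolding M0_def by auto
  have JMa: "(\<lambda>h. Sup (h ` M)) ` interval_product M = {bot..F}"
    and JMo: "\<And>h h'. h \<in> interval_product M \<Longrightarrow> h' \<in> interval_product M \<Longrightarrow>
        (\<forall>H\<in>M. h H \<le> h' H) \<longleftrightarrow> Sup (h ` M) \<le> Sup (h' ` M)"
    using JM unfolding jmi_alt by blast+
  have JNa: "(\<lambda>h. Sup (h ` N)) ` interval_product N = {bot..G}"
    and JNo: "\<And>h h'. h \<in> interval_product N \<Longrightarrow> h' \<in> interval_product N \<Longrightarrow>
        (\<forall>H\<in>N. h H \<le> h' H) \<longleftrightarrow> Sup (h ` N) \<le> Sup (h' ` N)"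
    using JN unfolding jmi_alt by blast+
  have A: "rN h \<in> interval_product N" if "h \<in> interval_product M'" for h
    using that unfolding interval_product_def rN_def M'_def by auto
  have B: "Sup (rN h ` N) = Sup (h ` N)" for h
    unfolding rN_def by (rule arg_cong[where f=Sup], auto)
  have C: "gof h \<in> interval_product M" if "h \<in> interval_product M'" for h
  proof -
    have "Sup (h ` N) \<le> G"
    proof (rule Sup_least)
      fix y assume "y \<in> h ` N"
      then obtain H where "H \<in> N" "y = h H" by auto
      have "h H \<le> H" using that \<open>H \<in> N\<close> unfolding interval_product_def M'_def by blast
      then show "y \<le> G" using NG \<open>H \<in> N\<close> \<open>y = h H\<close> by (meson order_trans)
    qed
    then show ?thesis using that G0 MI unfolding interval_product_def gof_def M'_def by auto
  qed
  have D: "Sup (gof h ` M) = Sup (h ` M')" for h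
  proof -
    have "gof h ` M = insert (Sup (h ` N)) (h ` M0)"
      unfolding MI gof_def using G0 by auto
    then show ?thesis unfolding M'_def by (simp add: image_Un Sup_union_distrib sup_commute)
  qed
  have img: "(\<lambda>h. Sup (h ` M')) ` interval_product M' = {bot..F}"
  proof
    show "(\<lambda>h. Sup (h ` M')) ` interval_product M' \<subseteq> {bot..F}"
    proof
      fix y assume "y \<in> (\<lambda>h. Sup (h ` M')) ` interval_product M'"
      then obtain h where h: "h \<in> interval_product M'" "y = Sup (h ` M')" by auto
      then have "y = Sup (gof h ` M)" using D by simp
      then show "y \<in> {bot..F}" using C[OF h(1)] JMa by blast
    qed
  next
    show "{bot..F} \<subseteq> (\<lambda>h. Sup (h ` M')) ` interval_product M'"
    proof
      fix y assume "y \<in> {bot..F}"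
      then obtain g where g: "g \<in> interval_product M" "y = Sup (g ` M)" using JMa by force
      have "g G \<in> {bot..G}" using g GM unfolding interval_product_def by auto
      then obtain k where k: "k \<in> interval_product N" "g G = Sup (k ` N)" using JNa by force
      define h where "h = (\<lambda>H. if H \<in> N then k H else if H \<in> M0 then g H else bot)"
      have hI: "h \<in> interval_product M'"
        using g k N0 unfolding h_def interval_product_def M'_def MI by auto
      have "gof h = g"
      proof
        fix H
        have "h ` N = k ` N" unfolding h_def by auto
        then show "gof h H = g H"
          using g k N0 G0 unfolding gof_def h_def interval_product_def MI by auto
      qed
      then have "y = Sup (h ` M')" using g D by metis
      then show "y \<in> (\<lambda>h. Sup (h ` M')) ` interval_product M'" using hI by blast
    qed
  qed
  have ord: "(\<forall>H\<in>M'. h H \<le> h' H) \<longleftrightarrow> Sup (h ` M') \<le> Sup (h' ` M')"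
    if h: "h \<in> interval_product M'" and h': "h' \<in> interval_product M'" for h h'
  proof -
    have "Sup (h ` M') \<le> Sup (h' ` M') \<longleftrightarrow> (\<forall>H\<in>M. gof h H \<le> gof h' H)"
      using JMo[OF C[OF h] C[OF h']] D by simp
    also have "\<dots> \<longleftrightarrow> Sup (h ` N) \<le> Sup (h' ` N) \<and> (\<forall>H\<in>M0. h H \<le> h' H)"
      unfolding MI gof_def using G0 by auto
    also have "Sup (h ` N) \<le> Sup (h' ` N) \<longleftrightarrow> (\<forall>H\<in>N. rN h H \<le> rN h' H)"
      using JNo[OF A[OF h] A[OF h']] B by simp
    also have "\<dots> \<longleftrightarrow> (\<forall>H\<in>N. h H \<le> h' H)" unfolding rN_def by auto
    finally show ?thesis unfolding M'_def by auto
  qed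
  show ?thesis unfolding jmi_alt M'_def[symmetric, unfolded M0_def]
    using img ord unfolding M'_def M0_def by blast
qed

theorem lemma2p26:
  fixes \<G> :: "'a::{finite,complete_lattice} set"
  assumes "geometric_lattice TYPE('a)"
    and "building_set \<G>"
    and "G \<in> \<G>"
  shows "building_set (\<G> - {G}) \<longleftrightarrow>
         join_map_iso (maximal_elems {H \<in> \<G> - {G}. H \<le> G}) G"
proof
  have Gb: "G \<noteq> bot" using assms(2,3) unfolding building_set_def by auto
  assume "building_set (\<G> - {G})"
  then show "join_map_iso (maximal_elems {H \<in> \<G> - {G}. H \<le> G}) G"
    using Gb unfolding building_set_def by blast
next
  assume JN: "join_map_iso (maximal_elems {H \<in> \<G> - {G}. H \<le> G}) G"
  have sub: "\<G> \<subseteq> UNIV - {bot}" and BS: "\<And>F. F \<noteq> bot \<Longrightarrow> join_map_iso (maximal_elems {H \<in> \<G>. H \<le> F}) F"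
    using assms(2) unfolding building_set_def by blast+
  have fm: "\<exists>y\<in>maximal_elems S. x \<le> y" if "x \<in> S" for x and S :: "'a set"
    using finite_has_maximal2[OF finite[of S] that] unfolding maximal_elems_def by auto
  show "building_set (\<G> - {G})"
    unfolding building_set_def
  proof (intro conjI allI impI)
    show "\<G> - {G} \<subseteq> UNIV - {bot}" using sub by auto
  next
    fix F :: 'a assume Fb: "F \<noteq> bot"
    define S where "S = {H \<in> \<G>. H \<le> F}"
    define M where "M = maximal_elems S"
    define N where "N = maximal_elems {H \<in> \<G> - {G}. H \<le> G}"
    have S': "{H \<in> \<G> - {G}. H \<le> F} = S - {G}" unfolding S_def by auto
    have JM: "join_map_iso M F" using BS[OF Fb] unfolding M_def S_def .
    show "join_map_iso (maximal_elems {H \<in> \<G> - {G}. H \<le> F}) F"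
    proof (cases "G \<in> M")
      case False
      have "maximal_elems (S - {G}) = M"
      proof (intro set_eqI iffI)
        fix x assume x: "x \<in> maximal_elems (S - {G})"
        then have "x \<in> S" unfolding maximal_elems_def by auto
        then obtain y where y: "y \<in> M" "x \<le> y" using fm unfolding M_def by blast
        have "y \<noteq> G" using y False by auto
        then have "y \<in> S - {G}" using y unfolding M_def maximal_elems_def by auto
        then have "y = x" using x y unfolding maximal_elems_def by auto
        then show "x \<in> M" using y by simp
      next
        fix x assume "x \<in> M"
        then show "x \<in> maximal_elems (S - {G})" using False unfolding M_def maximal_elems_def by auto
      qed
      then show ?thesis using JM S' by simp
    next
      case True
      have GS: "G \<in> S" "\<forall>y\<in>S. G \<le> y \<longrightarrow> y = G" using True unfolding M_def maximal_elems_def by auto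
      have NM: "N \<inter> M = {}"
      proof (rule ccontr)
        assume "N \<inter> M \<noteq> {}"
        then obtain x where x: "x \<in> N" "x \<in> M" by auto
        then have "x \<le> G" "x \<noteq> G" unfolding N_def maximal_elems_def by auto
        then show False using x(2) GS(1) unfolding M_def maximal_elems_def by auto
      qed
      have NG: "\<forall>H\<in>N. H \<le> G" unfolding N_def maximal_elems_def by auto
      have eq: "maximal_elems (S - {G}) = (M - {G}) \<union> N"
      proof (intro set_eqI iffI)
        fix x assume x: "x \<in> maximal_elems (S - {G})"
        then have xS: "x \<in> S" "x \<noteq> G" unfolding maximal_elems_def by auto
        then obtain y where y: "y \<in> M" "x \<le> y" using fm unfolding M_def by blast
        show "x \<in> (M - {G}) \<union> N"
        proof (cases "y = G")
          case False
          then have "y \<in> S - {G}" using y unfolding M_def maximal_elems_def by auto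
          then have "y = x" using x y unfolding maximal_elems_def by auto
          then show ?thesis using y False by simp
        next
          case True
          have GF: "G \<le> F" using GS(1) unfolding S_def by auto
          have "x \<in> N" using x xS y True GF unfolding N_def S_def maximal_elems_def by (auto intro: order_trans)
          then show ?thesis by simp
        qed
      next
        fix x assume "x \<in> (M - {G}) \<union> N"
        then show "x \<in> maximal_elems (S - {G})"
        proof
          assume "x \<in> M - {G}"
          then show ?thesis unfolding M_def maximal_elems_def by auto
        next
          assume xN: "x \<in> N"
          then have xG: "x \<in> \<G>" "x \<noteq> G" "x \<le> G" "x \<noteq> bot" using sub unfolding N_def maximal_elems_def by auto
          have xS: "x \<in> S - {G}" using xG GS(1) unfolding S_def by auto
          show ?thesis unfolding maximal_elems_def
          proof (intro CollectI conjI ballI impI xS)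
            fix z assume z: "z \<in> S - {G}" "x \<le> z"
            then obtain y where y: "y \<in> M" "z \<le> y" using fm unfolding M_def by blast
            show "z = x"
            proof (cases "y = G")
              case True
              then show ?thesis using xN z y unfolding N_def S_def maximal_elems_def by auto
            next
              case False
              have "x = bot" using jmi_indep[OF JM True y(1) _ xG(3)] False z(2) y(2)
                by (metis order_trans)
              then show ?thesis using xG by simp
            qed
          qed
        qed
      qed
      show ?thesis using jmi_compose[OF JM JN[folded N_def] True NM NG] eq S' by simp
    qed
  qed
qed

end
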